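(* Let $\mathcal{D}$ be a finite set, $n\ge3$ and $k\ge0$ integers. The share of $n$-ary relations on $\mathcal{D}$ that are projoin reducible with $k$ parameters, among all $2^{|\mathcal{D}|^n}$ $n$-ary relations on $\mathcal{D}$, is $<1$ when $|\mathcal{D}|>\binom{n+k}{n-1}$, and tends to $0$ as $|\mathcal{D}|\to\infty$ (with $n,k$ fixed).
   Context: An $n$-ary relation on $\mathcal{D}$ is $R\subseteq\mathcal{D}^\Sigma$ with $\Sigma=\{1,\dots,n\}$. For attributed relations $R_i\subseteq\mathcal{D}^{\Lambda_i}$, the join is $\{a\in\mathcal{D}^{\cup_i\Lambda_i}: a|_{\Lambda_i}\in R_i\ \forall i\}$ and $\pi_\Gamma$ denotes restriction of all tuples to $\Gamma$. $R$ is projoin reducible with $k$ parameters if there is a set $\textup{T}$ of $k$ attributes disjoint from $\Sigma$, a cover $\textup{T}\cup\Sigma=\Lambda_1\cup\dots\cup\Lambda_m$ with $0<|\Lambda_i|<n$, and $R^{\Lambda_i}\subseteq\mathcal{D}^{\Lambda_i}$ such that $R=\pi_\Sigma[R^{\Lambda_1}\Join\dots\Join R^{\Lambda_m}]$. *)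

theory Defs
  imports Complex_Main "HOL-Library.FuncSet"
begin

text \<open>Attributes are natural numbers; a tuple over the attribute set L with values
in D is an extensional function in PiE L (%_. D) (undefined outside L).
The standard attribute set is Sigma n = {1..n}.\<close>

definition Sig :: "nat \<Rightarrow> nat set" where
  "Sig n = {1..n}"

definition nary_relations :: "'a set \<Rightarrow> nat \<Rightarrow> (nat \<Rightarrow> 'a) set set" where
  "nary_relations D n = Pow (Sig n \<rightarrow>\<^sub>E D)"

definition join :: "'a set \<Rightarrow> nat \<Rightarrow> (nat \<Rightarrow> nat set) \<Rightarrow> (nat \<Rightarrow> (nat \<Rightarrow> 'a) set)
                     \<Rightarrow> (nat \<Rightarrow> 'a) set" where
  "join D m Ls Rs = {a \<in> (\<Union>i<m. Ls i) \<rightarrow>\<^sub>E D. \<forall>i<m. restrict a (Ls i) \<in> Rs i}"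

definition proj :: "nat set \<Rightarrow> (nat \<Rightarrow> 'a) set \<Rightarrow> (nat \<Rightarrow> 'a) set" where
  "proj G S = (\<lambda>a. restrict a G) ` S"

definition projoin_reducible :: "'a set \<Rightarrow> nat \<Rightarrow> nat \<Rightarrow> (nat \<Rightarrow> 'a) set \<Rightarrow> bool" where
  "projoin_reducible D n k R \<longleftrightarrow>
     (\<exists>T m Ls Rs. finite T \<and> card T = k \<and> T \<inter> Sig n = {} \<and>
        (\<Union>i<m. Ls i) = T \<union> Sig n \<and>
        (\<forall>i<m. 0 < card (Ls i) \<and> card (Ls i) < n \<and> Rs i \<subseteq> (Ls i \<rightarrow>\<^sub>E D)) \<and>
        R = proj (Sig n) (join D m Ls Rs))"

definition reducible_share :: "'a set \<Rightarrow> nat \<Rightarrow> nat \<Rightarrow> real" where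
  "reducible_share D n k =
     real (card {R \<in> nary_relations D n. projoin_reducible D n k R}) / 2 ^ (card D ^ n)"

end

theory Submission
  imports Defs
begin

definition Ssets :: "nat \<Rightarrow> nat \<Rightarrow> nat set set" where
  "Ssets n k = {S. S \<subseteq> {1..n+k} \<and> card S = n - 1}"

definition Phi :: "'a set \<Rightarrow> nat \<Rightarrow> nat \<Rightarrow> (nat set \<Rightarrow> (nat \<Rightarrow> 'a) set) \<Rightarrow> (nat \<Rightarrow> 'a) set" where
  "Phi D n k Q = {restrict z (Sig n) | z. z \<in> {1..n+k} \<rightarrow>\<^sub>E D \<and> (\<forall>S\<in>Ssets n k. restrict z S \<in> Q S)}"


lemma key:
  assumes "projoin_reducible D n k R"
  shows "\<exists>Q \<in> (\<Pi>\<^sub>E S\<in>Ssets n k. Pow (S \<rightarrow>\<^sub>E D)). R = Phi D n k Q"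
proof -
  obtain T m Ls Rs where T: "finite T" "card T = k" "T \<inter> Sig n = {}"
    and U: "(\<Union>i<m. Ls i) = T \<union> Sig n"
    and L: "\<forall>i<m. 0 < card (Ls i) \<and> card (Ls i) < n \<and> Rs i \<subseteq> (Ls i \<rightarrow>\<^sub>E D)"
    and R: "R = proj (Sig n) (join D m Ls Rs)"
    using assms unfolding projoin_reducible_def by blast
  obtain g where g: "bij_betw g {n+1..n+k} T"
    using finite_same_card_bij[of "{n+1..n+k}" T] T by auto
  define e where "e j = (if j \<in> Sig n then j else g j)" for j
  have e1: "bij_betw e (Sig n) (Sig n)"
  proof -
    have "bij_betw id (Sig n) (Sig n)" by simp
    moreover have "\<forall>x\<in>Sig n. e x = id x" by (simp add: e_def)
    ultimately show ?thesis by (metis bij_betw_cong)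
  qed
  have e2: "bij_betw e {n+1..n+k} T"
    by (rule bij_betw_cong[THEN iffD2, OF _ g]) (auto simp: e_def Sig_def)
  have "bij_betw e (Sig n \<union> {n+1..n+k}) (Sig n \<union> T)"
    by (rule bij_betw_combine[OF e1 e2]) (use T in auto)
  moreover have "Sig n \<union> {n+1..n+k} = {1..n+k}" by (auto simp: Sig_def)
  ultimately have e: "bij_betw e {1..n+k} (T \<union> Sig n)" by (simp add: Un_commute)
  define h where "h = inv_into {1..n+k} e"
  have he: "h (e j) = j" if "j \<in> {1..n+k}" for j
    using e that unfolding h_def by (meson bij_betw_inv_into_left)
  have eh: "e (h l) = l" if "l \<in> T \<union> Sig n" for l
    using e that unfolding h_def by (meson bij_betw_inv_into_right)
  have hin: "h l \<in> {1..n+k}" if "l \<in> T \<union> Sig n" for l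
    using e that unfolding h_def by (meson bij_betw_apply bij_betw_inv_into)
  have ein: "e j \<in> T \<union> Sig n" if "j \<in> {1..n+k}" for j
    using e that by (meson bij_betw_apply)
  have hS: "h l = l" if "l \<in> Sig n" for l
    using he[of l] that by (auto simp: e_def Sig_def)
  have LsU: "Ls i \<subseteq> T \<union> Sig n" if "i < m" for i using U that by blast
  have cover: "\<exists>S\<in>Ssets n k. Ls i \<subseteq> e ` S" if "i < m" for i
  proof -
    have fin: "finite (Ls i)" using L that by (metis card_ge_0_finite)
    have "card (h ` Ls i) \<le> n - 1" proof -
      have "card (Ls i) < n" using L that by blast
      then show ?thesis using card_image_le[OF fin, of h] by linarith
    qed
    moreover have "n - 1 \<le> card {1..n+k}" by simp
    moreover have "h ` Ls i \<subseteq> {1..n+k}" using hin LsU[OF that] by blast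
    ultimately obtain S where S: "h ` Ls i \<subseteq> S" "S \<subseteq> {1..n+k}" "card S = n - 1"
      using exists_subset_between[of "h ` Ls i" "n - 1" "{1..n+k}"] by auto
    have "Ls i \<subseteq> e ` S"
    proof
      fix l assume l: "l \<in> Ls i"
      then have "l = e (h l)" using eh LsU[OF that] by auto
      then show "l \<in> e ` S" using S l by blast
    qed
    then show ?thesis using S by (auto simp: Ssets_def)
  qed
  define Q where "Q = (\<lambda>S\<in>Ssets n k. {c \<in> S \<rightarrow>\<^sub>E D. \<forall>i<m. Ls i \<subseteq> e ` S \<longrightarrow> (\<lambda>l\<in>Ls i. c (h l)) \<in> Rs i})"
  have Qin: "Q \<in> (\<Pi>\<^sub>E S\<in>Ssets n k. Pow (S \<rightarrow>\<^sub>E D))" by (auto simp: Q_def)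
  have "R = Phi D n k Q"
  proof
    show "R \<subseteq> Phi D n k Q"
    proof
      fix x assume "x \<in> R"
      then obtain a where a: "a \<in> join D m Ls Rs" and x: "x = restrict a (Sig n)"
        using R by (auto simp: proj_def)
      have aP: "a \<in> (T \<union> Sig n) \<rightarrow>\<^sub>E D" and aR: "\<forall>i<m. restrict a (Ls i) \<in> Rs i"
        using a U by (auto simp: join_def)
      define z where "z = (\<lambda>j\<in>{1..n+k}. a (e j))"
      have z: "z \<in> {1..n+k} \<rightarrow>\<^sub>E D" 
      proof -
        have "a (e j) \<in> D" if "j \<in> {1..n+k}" for j using PiE_mem[OF aP ein[OF that]] .
        then show ?thesis unfolding z_def by auto
      qed
      have "restrict z (Sig n) = x"
        unfolding x z_def by (rule ext) (auto simp: e_def Sig_def)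
      moreover have "restrict z S \<in> Q S" if S: "S \<in> Ssets n k" for S
      proof -
        have Ssub: "S \<subseteq> {1..n+k}" using S by (auto simp: Ssets_def)
        have "(\<lambda>l\<in>Ls i. restrict z S (h l)) \<in> Rs i" if i: "i < m" "Ls i \<subseteq> e ` S" for i
        proof -
          have "(\<lambda>l\<in>Ls i. restrict z S (h l)) = restrict a (Ls i)"
          proof (rule ext)
            fix l show "(\<lambda>l\<in>Ls i. restrict z S (h l)) l = restrict a (Ls i) l"
            proof (cases "l \<in> Ls i")
              case True
              then obtain j where j: "j \<in> S" "l = e j" using i by blast
              then have "h l = j" using he Ssub by auto
              then show ?thesis using True j Ssub by (auto simp: z_def)
            qed simp
          qed
          then show ?thesis using aR i by simp
        qed
        then show ?thesis using S z Ssub by (auto simp: Q_def)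
      qed
      ultimately show "x \<in> Phi D n k Q" using z unfolding Phi_def by blast
    qed
  next
    show "Phi D n k Q \<subseteq> R"
    proof
      fix x assume "x \<in> Phi D n k Q"
      then obtain z where z: "z \<in> {1..n+k} \<rightarrow>\<^sub>E D" and zQ: "\<forall>S\<in>Ssets n k. restrict z S \<in> Q S"
        and x: "x = restrict z (Sig n)" unfolding Phi_def by blast
      define a where "a = (\<lambda>l\<in>T \<union> Sig n. z (h l))"
      have aP: "a \<in> (\<Union>i<m. Ls i) \<rightarrow>\<^sub>E D" using z hin U by (auto simp: a_def)
      have "restrict a (Ls i) \<in> Rs i" if i: "i < m" for i
      proof -
        obtain S where S: "S \<in> Ssets n k" "Ls i \<subseteq> e ` S" using cover[OF i] by blast
        have Ssub: "S \<subseteq> {1..n+k}" using S by (auto simp: Ssets_def)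
        have "(\<lambda>l\<in>Ls i. restrict z S (h l)) \<in> Rs i"
          using zQ S i by (auto simp: Q_def)
        moreover have "(\<lambda>l\<in>Ls i. restrict z S (h l)) = restrict a (Ls i)"
        proof (rule ext)
          fix l show "(\<lambda>l\<in>Ls i. restrict z S (h l)) l = restrict a (Ls i) l"
          proof (cases "l \<in> Ls i")
            case True
            then obtain j where j: "j \<in> S" "l = e j" using S by blast
            then have "h l = j" using he Ssub by auto
            then show ?thesis using True j LsU[OF i] by (auto simp: a_def)
          qed simp
        qed
        ultimately show ?thesis by simp
      qed
      then have "a \<in> join D m Ls Rs" using aP by (auto simp: join_def)
      moreover have "x = restrict a (Sig n)"
        unfolding x a_def by (rule ext) (auto simp: hS)
      ultimately show "x \<in> R" using R by (auto simp: proj_def)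
    qed
  qed
  then show ?thesis using Qin by blast
qed

lemma count:
  assumes "finite D"
  shows "card {R \<in> nary_relations D n. projoin_reducible D n k R}
           \<le> 2 ^ (((n + k) choose (n - 1)) * card D ^ (n - 1))"
proof -
  define F where "F = (\<Pi>\<^sub>E S\<in>Ssets n k. Pow (S \<rightarrow>\<^sub>E D))"
  have finS: "finite (Ssets n k)" unfolding Ssets_def by simp
  have cS: "card (Ssets n k) = (n + k) choose (n - 1)"
    unfolding Ssets_def using n_subsets[of "{1..n+k}" "n - 1"] by simp
  have cF: "card F = 2 ^ (((n + k) choose (n - 1)) * card D ^ (n - 1))"
  proof -
    have "card F = (\<Prod>S\<in>Ssets n k. card (Pow (S \<rightarrow>\<^sub>E D)))"
      unfolding F_def by (rule card_PiE[OF finS])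
    also have "\<dots> = (\<Prod>S\<in>Ssets n k. 2 ^ (card D ^ (n - 1)))"
    proof (rule prod.cong[OF refl])
      fix S assume S: "S \<in> Ssets n k"
      then have fS: "finite S" and cS: "card S = n - 1" unfolding Ssets_def
        by (auto intro: finite_subset)
      have "card (S \<rightarrow>\<^sub>E D) = card D ^ (n - 1)"
        using card_PiE[OF fS, of "\<lambda>_. D"] cS by simp
      moreover have "finite (S \<rightarrow>\<^sub>E D)" using fS assms by (simp add: finite_PiE)
      ultimately show "card (Pow (S \<rightarrow>\<^sub>E D)) = 2 ^ (card D ^ (n - 1))"
        by (simp add: card_Pow)
    qed
    also have "\<dots> = 2 ^ (((n + k) choose (n - 1)) * card D ^ (n - 1))"
      by (simp add: cS power_mult mult.commute)
    finally show ?thesis .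
  qed
  have finF: "finite F" unfolding F_def using finS assms
    by (intro finite_PiE) (auto simp: Ssets_def intro!: finite_PiE intro: finite_subset)
  have "{R \<in> nary_relations D n. projoin_reducible D n k R} \<subseteq> Phi D n k ` F"
    using key unfolding F_def by blast
  then have "card {R \<in> nary_relations D n. projoin_reducible D n k R} \<le> card (Phi D n k ` F)"
    using finF by (intro card_mono) auto
  also have "\<dots> \<le> card F" using finF by (rule card_image_le)
  finally show ?thesis using cF by simp
qed

lemma share_bound:
  assumes "finite D"
  shows "reducible_share D n k \<le> 2 ^ (((n + k) choose (n - 1)) * card D ^ (n - 1)) / 2 ^ (card D ^ n)"
  unfolding reducible_share_def
  using count[OF assms, of n k]
  by (intro divide_right_mono) (auto simp flip: of_nat_power)

theorem theorem24:
  fixes n k :: nat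
  assumes "n \<ge> 3"
  shows "(\<forall>D :: 'a set. finite D \<and> card D > (n + k) choose (n - 1) \<longrightarrow>
            reducible_share D n k < 1) \<and>
         (\<forall>\<epsilon> > 0. \<exists>N. \<forall>D :: 'a set. finite D \<and> card D \<ge> N \<longrightarrow>
            reducible_share D n k < \<epsilon>)"
proof -
  define C where "C = (n + k) choose (n - 1)"
  have pw: "card D ^ n = card D * card D ^ (n - 1)" for D :: "'a set"
    using assms by (metis Suc_pred' less_le_trans numeral_3_eq_3 power_Suc zero_less_Suc)
  have bnd: "reducible_share D n k \<le> 1 / 2 ^ (card D ^ n - C * card D ^ (n - 1))"
    if "finite D" "card D > C" for D :: "'a set"
  proof -
    define d where "d = card D"
    have le: "C * d ^ (n - 1) \<le> d ^ n" using pw[of D] that(2) unfolding d_def by simp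
    have "(2::real) ^ (d ^ n) = 2 ^ (C * d ^ (n - 1)) * 2 ^ (d ^ n - C * d ^ (n - 1))"
      using le by (simp flip: power_add)
    then have "(2::real) ^ (C * d ^ (n - 1)) / 2 ^ (d ^ n) = 1 / 2 ^ (d ^ n - C * d ^ (n - 1))"
      by simp
    then show ?thesis using share_bound[OF that(1), of n k] unfolding C_def d_def by simp
  qed
  have part1: "reducible_share D n k < 1" if "finite D" "card D > C" for D :: "'a set"
  proof -
    define d where "d = card D"
    have "0 < d ^ (n - 1)" using that(2) unfolding d_def by simp
    then have "C * d ^ (n - 1) < d ^ n" using pw[of D] that(2) unfolding d_def by simp
    then have "0 < d ^ n - C * d ^ (n - 1)" by simp
    then have "(1::real) < 2 ^ (d ^ n - C * d ^ (n - 1))" by (simp add: one_less_power)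
    then show ?thesis using bnd[OF that] unfolding d_def
      by (smt (verit) divide_less_eq_1_pos)
  qed
  have part2: "\<exists>N. \<forall>D :: 'a set. finite D \<and> card D \<ge> N \<longrightarrow> reducible_share D n k < \<epsilon>"
    if eps: "\<epsilon> > 0" for \<epsilon> :: real
  proof -
    obtain M where M: "(1/2::real) ^ M < \<epsilon>"
      using real_arch_pow_inv[OF eps, of "1/2"] by auto
    show ?thesis
    proof (intro exI[of _ "C + M + 1"] allI impI)
      fix D :: "'a set" assume D: "finite D \<and> C + M + 1 \<le> card D"
      define d where "d = card D"
      have dC: "d > C" using D unfolding d_def by simp
      have "1 \<le> d ^ (n - 1)" using dC by simp
      then have "(d - C) * 1 \<le> (d - C) * d ^ (n - 1)" by (intro mult_left_mono) auto
      also have "\<dots> = d ^ n - C * d ^ (n - 1)" using pw[of D] unfolding d_def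
        by (simp add: diff_mult_distrib)
      finally have "M \<le> d ^ n - C * d ^ (n - 1)" using D unfolding d_def by linarith
      then have "(2::real) ^ M \<le> 2 ^ (d ^ n - C * d ^ (n - 1))" by (intro power_increasing) auto
      then have "1 / (2::real) ^ (d ^ n - C * d ^ (n - 1)) \<le> 1 / 2 ^ M"
        by (intro divide_left_mono) auto
      also have "\<dots> = (1/2) ^ M" by (simp add: power_divide)
      finally show "reducible_share D n k < \<epsilon>"
        using bnd[of D] D dC M unfolding d_def by linarith
    qed
  qed
  show ?thesis using part1 part2 unfolding C_def by blast
qed

end
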